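(* Consider the sequence of binary classification problems indexed by $m$ described in the context, and suppose that $N=o(m)$, $n=o(m)$, and $m=o(\min\{N^2,Nn\})$ as $m\to\infty$. Then there exists a classifier $\phi$ whose generalized error exponent satisfies $J(\phi)>0$.
   Context: For each integer $m\ge1$ let $[m]=\{1,\dots,m\}$ be the alphabet. The sample sizes $N=N(m)$ and $n=n(m)$ are positive integers with $N,n\to\infty$ as $m\to\infty$. Fix constants $\varepsilon>0$ and $\bar c>0$ (a large positive constant). Let $\mathcal P_m$ be the set of pairs $(\pi,\mu)$ of probability distributions on $[m]$ with $\|\mu-\pi\|_1\ge\varepsilon$, $\max_j\pi_j\le \bar c/m$ and $\max_j\mu_j\le\bar c/m$. Two training sequences $X=(X_1,\dots,X_N)$ i.i.d. with marginal $\pi$ and $Y=(Y_1,\dots,Y_N)$ i.i.d. with marginal $\mu$, and a test sequence $Z=(Z_1,\dots,Z_n)$ i.i.d. with marginal $\nu$ are observed, the three sequences being independent; $\mathsf P_{(\pi,\mu,\nu)}$ denotes the corresponding probability. A classifier is a sequence $\phi=\{\phi_m\}$ of functions $\phi_m:[m]^N\times[m]^N\times[m]^n\to\{0,1\}$ (output $1$ means deciding that $Z$ comes from $\mu$). Its worst-case average probability of error is $$P_e(\phi_m)=\sup_{(\pi,\mu)\in\mathcal P_m}\Big[\tfrac12\mathsf P_{(\pi,\mu,\pi)}\{\phi_m=1\}+\tfrac12\mathsf P_{(\pi,\mu,\mu)}\{\phi_m=0\}\Big].$$ With the normalization $r(N,n,m)=\min\{N^2,Nn\}/m$, the generalized error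 exponent of $\phi$ is $$J(\phi)=-\limsup_{m\to\infty}\frac{1}{r(N,n,m)}\log P_e(\phi_m).$$ *)

theory Defs
  imports "HOL-Analysis.Analysis" "HOL-Library.Landau_Symbols"
begin

definition seqs :: "nat \<Rightarrow> nat \<Rightarrow> nat list set" where
  "seqs m k = {xs. length xs = k \<and> set xs \<subseteq> {1..m}}"

definition is_dist :: "nat \<Rightarrow> (nat \<Rightarrow> real) \<Rightarrow> bool" where
  "is_dist m p \<longleftrightarrow> (\<forall>j\<in>{1..m}. 0 \<le> p j) \<and> (\<Sum>j\<in>{1..m}. p j) = 1"

definition seq_prob :: "(nat \<Rightarrow> real) \<Rightarrow> nat list \<Rightarrow> real" where
  "seq_prob p xs = prod_list (map p xs)"

definition admissible :: "real \<Rightarrow> real \<Rightarrow> nat \<Rightarrow> (nat \<Rightarrow> real) \<Rightarrow> (nat \<Rightarrow> real) \<Rightarrow> bool" where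
  "admissible \<epsilon> cbar m \<pi> \<mu> \<longleftrightarrow> is_dist m \<pi> \<and> is_dist m \<mu>
     \<and> (\<Sum>j\<in>{1..m}. \<bar>\<mu> j - \<pi> j\<bar>) \<ge> \<epsilon>
     \<and> (\<forall>j\<in>{1..m}. \<pi> j \<le> cbar / real m) \<and> (\<forall>j\<in>{1..m}. \<mu> j \<le> cbar / real m)"

text \<open>P_{(pi,mu,nu)} { phi_m = True } for training length Nm and test length nm.
  Output True of the classifier means deciding 1 (Z comes from mu).\<close>
definition prob_decide ::
  "nat \<Rightarrow> nat \<Rightarrow> nat \<Rightarrow> (nat list \<Rightarrow> nat list \<Rightarrow> nat list \<Rightarrow> bool) \<Rightarrow> bool
   \<Rightarrow> (nat \<Rightarrow> real) \<Rightarrow> (nat \<Rightarrow> real) \<Rightarrow> (nat \<Rightarrow> real) \<Rightarrow> real" where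
  "prob_decide m Nm nm \<phi> b \<pi> \<mu> \<nu> =
     (\<Sum>x\<in>seqs m Nm. \<Sum>y\<in>seqs m Nm. \<Sum>z\<in>seqs m nm.
        if \<phi> x y z = b then seq_prob \<pi> x * seq_prob \<mu> y * seq_prob \<nu> z else 0)"

text \<open>Worst-case average error probability P_e(phi_m) (Sup over an empty class is bot, i.e. treated as 0 below).\<close>
definition worst_error ::
  "real \<Rightarrow> real \<Rightarrow> nat \<Rightarrow> nat \<Rightarrow> nat \<Rightarrow> (nat list \<Rightarrow> nat list \<Rightarrow> nat list \<Rightarrow> bool) \<Rightarrow> ereal" where
  "worst_error \<epsilon> cbar m Nm nm \<phi> =
     (SUP (\<pi>, \<mu>) \<in> {(\<pi>, \<mu>). admissible \<epsilon> cbar m \<pi> \<mu>}.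
        ereal (1/2 * prob_decide m Nm nm \<phi> True \<pi> \<mu> \<pi> + 1/2 * prob_decide m Nm nm \<phi> False \<pi> \<mu> \<mu>))"

definition eln :: "ereal \<Rightarrow> ereal" where
  "eln x = (if x \<le> 0 then -\<infinity> else if x = \<infinity> then \<infinity> else ereal (ln (real_of_ereal x)))"

definition rate :: "(nat \<Rightarrow> nat) \<Rightarrow> (nat \<Rightarrow> nat) \<Rightarrow> nat \<Rightarrow> real" where
  "rate N n m = min (real (N m) ^ 2) (real (N m) * real (n m)) / real m"

definition error_exponent ::
  "real \<Rightarrow> real \<Rightarrow> (nat \<Rightarrow> nat) \<Rightarrow> (nat \<Rightarrow> nat)
   \<Rightarrow> (nat \<Rightarrow> nat list \<Rightarrow> nat list \<Rightarrow> nat list \<Rightarrow> bool) \<Rightarrow> ereal" where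
  "error_exponent \<epsilon> cbar N n \<phi> =
     - limsup (\<lambda>m. eln (worst_error \<epsilon> cbar m (N m) (n m) (\<phi> m)) * ereal (1 / rate N n m))"

end

theory Submission
  imports Defs
begin


lemma seqs_Suc: "seqs m (Suc k) = (\<lambda>(j,x). j#x) ` ({1..m} \<times> seqs m k)"
  unfolding seqs_def by (auto simp: image_iff length_Suc_conv)

lemma seqs_0[simp]: "seqs m 0 = {[]}" by (auto simp: seqs_def)

lemma finite_seqs: "finite (seqs m k)"
proof (induction k)
  case 0 then show ?case by simp
next
  case (Suc k) then show ?case by (simp add: seqs_Suc)
qed

lemma sum_seqs_Suc: "(\<Sum>x\<in>seqs m (Suc k). f x) = (\<Sum>j\<in>{1..m}. \<Sum>x\<in>seqs m k. f (j#x))"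
proof -
  have inj: "inj_on (\<lambda>(j,x). j#x) ({1..m} \<times> seqs m k)" by (auto simp: inj_on_def)
  show ?thesis unfolding seqs_Suc sum.reindex[OF inj]
    by (simp add: sum.cartesian_product finite_seqs split_beta)
qed

lemma sum_prod_list_seqs: "(\<Sum>x\<in>seqs m k. prod_list (map (f::nat\<Rightarrow>real) x)) = (\<Sum>j\<in>{1..m}. f j) ^ k"
proof (induction k)
  case 0 then show ?case by simp
next
  case (Suc k)
  have "(\<Sum>x\<in>seqs m (Suc k). prod_list (map f x)) = (\<Sum>j\<in>{1..m}. f j * (\<Sum>x\<in>seqs m k. prod_list (map f x)))"
    unfolding sum_seqs_Suc by (auto simp: sum_distrib_left intro!: sum.cong)
  also have "\<dots> = (\<Sum>j\<in>{1..m}. f j) ^ Suc k" using Suc by (simp add: sum_distrib_right[symmetric])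
  finally show ?case .
qed

lemma seq_prob_total: "is_dist m p \<Longrightarrow> (\<Sum>x\<in>seqs m k. seq_prob p x) = 1"
  unfolding seq_prob_def is_dist_def by (simp add: sum_prod_list_seqs)

lemma seq_prob_nonneg: "is_dist m p \<Longrightarrow> x \<in> seqs m k \<Longrightarrow> 0 \<le> seq_prob p x"
  unfolding seq_prob_def is_dist_def seqs_def
  by (intro prod_list_nonneg) auto

lemma seqs_append: "seqs m (h + k) = (\<lambda>(a,b). a @ b) ` (seqs m h \<times> seqs m k)"
  unfolding seqs_def
proof (intro equalityI subsetI)
  fix x assume "x \<in> {xs. length xs = h + k \<and> set xs \<subseteq> {1..m}}"
  then have "x = take h x @ drop h x" "take h x \<in> {xs. length xs = h \<and> set xs \<subseteq> {1..m}}"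
    "drop h x \<in> {xs. length xs = k \<and> set xs \<subseteq> {1..m}}"
    by (auto dest: in_set_takeD in_set_dropD)
  then show "x \<in> (\<lambda>(a,b). a @ b) ` ({xs. length xs = h \<and> set xs \<subseteq> {1..m}} \<times> {xs. length xs = k \<and> set xs \<subseteq> {1..m}})"
    by (metis (no_types, lifting) SigmaI case_prod_conv image_eqI)
qed (auto simp: subset_iff)

lemma sum_seqs_append: "(\<Sum>x\<in>seqs m (h+k). f x) = (\<Sum>a\<in>seqs m h. \<Sum>b\<in>seqs m k. f (a@b))"
proof -
  have inj: "inj_on (\<lambda>(a,b). a @ b) (seqs m h \<times> seqs m k)" by (auto simp: inj_on_def seqs_def)
  show ?thesis unfolding seqs_append sum.reindex[OF inj]
    by (simp add: sum.cartesian_product finite_seqs split_beta)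
qed

lemma seq_prob_append: "seq_prob p (a@b) = seq_prob p a * seq_prob p b"
  by (simp add: seq_prob_def)



definition ind :: "bool \<Rightarrow> real" where "ind P = (if P then 1 else 0)"

definition cnt :: "nat list \<Rightarrow> nat list \<Rightarrow> nat" where
  "cnt A B = length (filter (\<lambda>x. x \<in> set B) A)"
definition qm :: "(nat \<Rightarrow> real) \<Rightarrow> nat list \<Rightarrow> real" where
  "qm \<alpha> B = (\<Sum>j\<in>set B. \<alpha> j)"
definition Wt :: "(nat \<Rightarrow> real) \<Rightarrow> nat list \<Rightarrow> real" where
  "Wt \<alpha> B = sum_list (map \<alpha> B)"
fun rep :: "nat list \<Rightarrow> nat" where
  "rep [] = 0"
| "rep (x#xs) = rep xs + (if x \<in> set xs then 1 else 0)"
definition ip :: "nat \<Rightarrow> (nat \<Rightarrow> real) \<Rightarrow> (nat \<Rightarrow> real) \<Rightarrow> real" where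
  "ip m \<alpha> \<beta> = (\<Sum>j\<in>{1..m}. \<alpha> j * \<beta> j)"

lemma seqs_set: "x \<in> seqs m k \<Longrightarrow> set x \<subseteq> {1..m}" by (simp add: seqs_def)
lemma seqs_len: "x \<in> seqs m k \<Longrightarrow> length x = k" by (simp add: seqs_def)

lemma exp_neg_bound: assumes "0 \<le> (x::real)" shows "exp (-x) \<le> 1 - x + x^2"
proof -
  have "0 \<le> (x - 1/2)^2" by simp
  then have "0 \<le> x^2 - x + 1/4" by (simp add: power2_diff power2_eq_square algebra_simps)
  then have pos: "0 < 1 - x + x^2" by linarith
  have "(1 + x) * (1 - x + x^2) = 1 + x^3" by (simp add: algebra_simps power2_eq_square power3_eq_cube)
  then have "1 \<le> (1 + x) * (1 - x + x^2)" using assms by simp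
  also have "\<dots> \<le> exp x * (1 - x + x^2)" using pos by (intro mult_right_mono) auto
  finally show ?thesis by (simp add: exp_minus field_simps)
qed

lemma pow_le_exp: assumes "0 \<le> 1 + (x::real)" shows "(1 + x) ^ k \<le> exp (real k * x)"
proof -
  have "(1 + x) ^ k \<le> (exp x) ^ k" using assms by (intro power_mono) auto
  then show ?thesis by (simp add: exp_of_nat_mult)
qed

lemma chernoff:
  assumes "finite S" "\<And>x. x \<in> S \<Longrightarrow> 0 \<le> w x" "0 \<le> \<theta>" "\<And>x. x \<in> S \<Longrightarrow> P x \<Longrightarrow> t \<le> f x"
  shows "(\<Sum>x\<in>S. w x * ind (P x)) \<le> (\<Sum>x\<in>S. w x * exp (\<theta> * (f x - t)))"
proof (intro sum_mono)
  fix x assume x: "x \<in> S"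
  have "ind (P x) \<le> exp (\<theta> * (f x - t))"
    using assms(3) assms(4)[OF x] by (auto simp: ind_def intro!: mult_nonneg_nonneg)
  then show "w x * ind (P x) \<le> w x * exp (\<theta> * (f x - t))"
    using assms(2)[OF x] by (intro mult_left_mono) auto
qed

lemma qm_nonneg: "is_dist m \<alpha> \<Longrightarrow> set B \<subseteq> {1..m} \<Longrightarrow> 0 \<le> qm \<alpha> B"
  unfolding qm_def is_dist_def by (intro sum_nonneg) auto

lemma qm_le1: "is_dist m \<alpha> \<Longrightarrow> set B \<subseteq> {1..m} \<Longrightarrow> qm \<alpha> B \<le> 1"
  unfolding qm_def is_dist_def
proof -
  assume a: "(\<forall>j\<in>{1..m}. 0 \<le> \<alpha> j) \<and> sum \<alpha> {1..m} = 1" and b: "set B \<subseteq> {1..m}"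
  have "(\<Sum>j\<in>set B. \<alpha> j) \<le> (\<Sum>j\<in>{1..m}. \<alpha> j)" using a b by (intro sum_mono2) auto
  then show "(\<Sum>j\<in>set B. \<alpha> j) \<le> 1" using a by simp
qed

lemma qm_le_card: assumes "\<forall>j\<in>{1..m}. \<alpha> j \<le> c" "set B \<subseteq> {1..m}" "0 \<le> c"
  shows "qm \<alpha> B \<le> real (length B) * c"
proof -
  have "qm \<alpha> B \<le> (\<Sum>j\<in>set B. c)" unfolding qm_def using assms by (intro sum_mono) auto
  also have "\<dots> = real (card (set B)) * c" by simp
  also have "\<dots> \<le> real (length B) * c" using assms(3) by (intro mult_right_mono) (auto simp: card_length)
  finally show ?thesis .
qed

lemma qm_cons: "qm \<alpha> (x#xs) = (if x \<in> set xs then qm \<alpha> xs else \<alpha> x + qm \<alpha> xs)"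
  by (simp add: qm_def insert_absorb)

lemma qm_le_Wt: "(\<forall>j\<in>set B. 0 \<le> \<alpha> j) \<Longrightarrow> qm \<alpha> B \<le> Wt \<alpha> B"
  by (induction B) (auto simp: qm_cons Wt_def qm_def[of _ "[]"])

lemma Wt_le_qm_rep: "(\<forall>j\<in>set B. \<alpha> j \<le> c) \<Longrightarrow> Wt \<alpha> B \<le> qm \<alpha> B + c * real (rep B)"
  by (induction B) (auto simp: qm_cons Wt_def qm_def[of _ "[]"] algebra_simps)

lemma mgf_cnt: assumes "is_dist m \<alpha>" "set B \<subseteq> {1..m}"
  shows "(\<Sum>A\<in>seqs m a. seq_prob \<alpha> A * exp (l * real (cnt A B))) = (1 + qm \<alpha> B * (exp l - 1)) ^ a"
proof -
  have e: "seq_prob \<alpha> A * exp (l * real (cnt A B)) = prod_list (map (\<lambda>j. \<alpha> j * exp (l * (if j \<in> set B then 1 else 0))) A)" for A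
    by (induction A) (auto simp: seq_prob_def cnt_def exp_add distrib_left)
  have s: "(\<Sum>j\<in>{1..m}. \<alpha> j * exp (l * (if j \<in> set B then 1 else 0))) = (\<Sum>j\<in>{1..m}. \<alpha> j + (if j \<in> set B then \<alpha> j * (exp l - 1) else 0))"
    by (intro sum.cong) (auto simp: algebra_simps)
  also have "\<dots> = 1 + (\<Sum>j\<in>{1..m} \<inter> set B. \<alpha> j * (exp l - 1))"
    using assms(1) by (simp add: sum.distrib sum.inter_restrict[symmetric] is_dist_def)
  also have "{1..m} \<inter> set B = set B" using assms(2) by auto
  finally show ?thesis unfolding e sum_prod_list_seqs qm_def by (simp add: sum_distrib_right)
qed

lemma mgf_Wt: "(\<Sum>B\<in>seqs m b. seq_prob \<beta> B * exp (t * Wt \<alpha> B)) = (\<Sum>j\<in>{1..m}. \<beta> j * exp (t * \<alpha> j)) ^ b"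
proof -
  have e: "seq_prob \<beta> B * exp (t * Wt \<alpha> B) = prod_list (map (\<lambda>j. \<beta> j * exp (t * \<alpha> j)) B)" for B
    by (induction B) (auto simp: seq_prob_def Wt_def exp_add distrib_left)
  show ?thesis unfolding e sum_prod_list_seqs ..
qed



lemma mgf_rep: assumes "is_dist m \<beta>" "\<forall>j\<in>{1..m}. \<beta> j \<le> c" "0 \<le> c"
  shows "(\<Sum>B\<in>seqs m b. seq_prob \<beta> B * exp (real (rep B))) \<le> exp (2 * real b ^ 2 * c)"
proof (induction b)
  case 0 then show ?case by (simp add: seq_prob_def)
next
  case (Suc k)
  have inner: "(\<Sum>j\<in>{1..m}. \<beta> j * exp (real (rep (j#x)))) \<le> exp (real (rep x)) * exp (2 * real k * c)"
    if x: "x \<in> seqs m k" for x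
  proof -
    have "(\<Sum>j\<in>{1..m}. \<beta> j * exp (real (rep (j#x)))) = exp (real (rep x)) * (\<Sum>j\<in>{1..m}. \<beta> j + (if j \<in> set x then \<beta> j * (exp 1 - 1) else 0))"
      by (auto simp: sum_distrib_left algebra_simps exp_add intro!: sum.cong)
    also have "(\<Sum>j\<in>{1..m}. \<beta> j + (if j \<in> set x then \<beta> j * (exp 1 - 1) else 0)) = 1 + qm \<beta> x * (exp 1 - 1)"
    proof -
      have "(\<Sum>j\<in>{1..m}. \<beta> j + (if j \<in> set x then \<beta> j * (exp 1 - 1) else 0)) = 1 + (\<Sum>j\<in>{1..m} \<inter> set x. \<beta> j * (exp 1 - 1))"
        using assms(1) by (simp add: sum.distrib sum.inter_restrict[symmetric] is_dist_def)
      also have "{1..m} \<inter> set x = set x" using seqs_set[OF x] by auto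
      finally show ?thesis by (simp add: qm_def sum_distrib_right)
    qed
    also have "\<dots> \<le> 1 + real k * c * 2"
    proof -
      have "qm \<beta> x \<le> real k * c" using qm_le_card[OF assms(2) seqs_set[OF x] assms(3)] seqs_len[OF x] by simp
      moreover have "exp 1 - 1 \<le> (2::real)" using exp_le by simp
      moreover have "0 \<le> qm \<beta> x" using qm_nonneg[OF assms(1) seqs_set[OF x]] .
      moreover have "0 \<le> exp 1 - (1::real)" by simp
      ultimately have "qm \<beta> x * (exp 1 - 1) \<le> real k * c * 2" by (intro mult_mono) auto
      then show ?thesis by simp
    qed
    also have "\<dots> \<le> exp (2 * real k * c)" using exp_ge_add_one_self[of "2 * real k * c"] by (simp add: mult.commute mult.left_commute)
    finally show ?thesis by (simp add: mult_left_mono)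
  qed
  have "(\<Sum>B\<in>seqs m (Suc k). seq_prob \<beta> B * exp (real (rep B))) = (\<Sum>x\<in>seqs m k. seq_prob \<beta> x * (\<Sum>j\<in>{1..m}. \<beta> j * exp (real (rep (j#x)))))"
    unfolding sum_seqs_Suc by (subst sum.swap) (auto simp: seq_prob_def sum_distrib_left algebra_simps intro!: sum.cong)
  also have "\<dots> \<le> (\<Sum>x\<in>seqs m k. seq_prob \<beta> x * (exp (real (rep x)) * exp (2 * real k * c)))"
    by (intro sum_mono mult_left_mono inner seq_prob_nonneg[OF assms(1)]) auto
  also have "\<dots> = (\<Sum>x\<in>seqs m k. seq_prob \<beta> x * exp (real (rep x))) * exp (2 * real k * c)"
    unfolding sum_distrib_right by (simp add: mult.assoc)
  also have "\<dots> \<le> exp (2 * real k ^ 2 * c) * exp (2 * real k * c)" using Suc by (intro mult_right_mono) auto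
  also have "\<dots> \<le> exp (2 * real (Suc k) ^ 2 * c)"
    using assms(3) by (simp add: exp_add[symmetric] power2_eq_square algebra_simps mult_nonneg_nonneg)
  finally show ?case .
qed



lemma exp_l_bound: "0 \<le> (l::real) \<Longrightarrow> l \<le> 1 \<Longrightarrow> exp l - 1 - l \<le> l^2"
  using exp_bound[of l] by simp

lemma exp_nl_bound: "0 \<le> (l::real) \<Longrightarrow> exp (-l) - 1 + l \<le> l^2"
  using exp_neg_bound[of l] by simp

lemma exp_shift: "exp ((l::real) * (x - t)) = exp (- l * t) * exp (l * x)"
  by (simp add: exp_add[symmetric] algebra_simps)

lemma tail_cnt_up:
  assumes "is_dist m \<alpha>" "set B \<subseteq> {1..m}" "qm \<alpha> B \<le> Q" "0 \<le> l" "l \<le> 1"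
  shows "(\<Sum>A\<in>seqs m a. seq_prob \<alpha> A * ind (real a * qm \<alpha> B + D \<le> real (cnt A B)))
     \<le> exp (real a * Q * l^2 - l * D)"
proof -
  define q where "q = qm \<alpha> B"
  have q0: "0 \<le> q" using qm_nonneg[OF assms(1,2)] q_def by simp
  have "(\<Sum>A\<in>seqs m a. seq_prob \<alpha> A * ind (real a * q + D \<le> real (cnt A B)))
      \<le> (\<Sum>A\<in>seqs m a. seq_prob \<alpha> A * exp (l * (real (cnt A B) - (real a * q + D))))"
    by (intro chernoff finite_seqs seq_prob_nonneg[OF assms(1)] assms(4)) auto
  also have "\<dots> = exp (- l * (real a * q + D)) * (\<Sum>A\<in>seqs m a. seq_prob \<alpha> A * exp (l * real (cnt A B)))"
    unfolding exp_shift sum_distrib_left by (simp add: mult.left_commute)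
  also have "\<dots> = exp (- l * (real a * q + D)) * (1 + q * (exp l - 1)) ^ a"
    using mgf_cnt[OF assms(1,2)] q_def by simp
  also have "\<dots> \<le> exp (- l * (real a * q + D)) * exp (real a * (q * (exp l - 1)))"
    using q0 assms(4) by (intro mult_left_mono pow_le_exp) (auto intro!: add_nonneg_nonneg mult_nonneg_nonneg)
  also have "\<dots> = exp (real a * q * (exp l - 1 - l) - l * D)"
    by (simp add: exp_add[symmetric] algebra_simps)
  also have "\<dots> \<le> exp (real a * Q * l^2 - l * D)"
  proof -
    have "q * (exp l - 1 - l) \<le> Q * l^2"
      using q0 assms(3,4,5) exp_l_bound[OF assms(4,5)] q_def exp_ge_add_one_self[of l]
      by (intro mult_mono) linarith+
    then have "real a * (q * (exp l - 1 - l)) \<le> real a * (Q * l^2)" by (intro mult_left_mono) auto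
    then show ?thesis by (simp add: algebra_simps)
  qed
  finally show ?thesis unfolding q_def .
qed

lemma tail_cnt_low:
  assumes "is_dist m \<alpha>" "set B \<subseteq> {1..m}" "qm \<alpha> B \<le> Q" "0 \<le> l"
  shows "(\<Sum>A\<in>seqs m a. seq_prob \<alpha> A * ind (real (cnt A B) \<le> real a * qm \<alpha> B - D))
     \<le> exp (real a * Q * l^2 - l * D)"
proof -
  define q where "q = qm \<alpha> B"
  have q0: "0 \<le> q" using qm_nonneg[OF assms(1,2)] q_def by simp
  have q1: "q \<le> 1" using qm_le1[OF assms(1,2)] q_def by simp
  have "(\<Sum>A\<in>seqs m a. seq_prob \<alpha> A * ind (real (cnt A B) \<le> real a * q - D))
      \<le> (\<Sum>A\<in>seqs m a. seq_prob \<alpha> A * exp (l * (- real (cnt A B) - (D - real a * q))))"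
    by (intro chernoff finite_seqs seq_prob_nonneg[OF assms(1)] assms(4)) auto
  also have "\<dots> = exp (l * (real a * q - D)) * (\<Sum>A\<in>seqs m a. seq_prob \<alpha> A * exp ((-l) * real (cnt A B)))"
    unfolding exp_shift sum_distrib_left by (simp add: mult.left_commute algebra_simps)
  also have "\<dots> = exp (l * (real a * q - D)) * (1 + q * (exp (-l) - 1)) ^ a"
    using mgf_cnt[OF assms(1,2), where l="-l" and a=a] q_def by simp
  also have "\<dots> \<le> exp (l * (real a * q - D)) * exp (real a * (q * (exp (-l) - 1)))"
  proof -
    have "exp (-l) \<le> 1" using assms(4) by simp
    then have "q * (1 - exp (-l)) \<le> 1 * 1" using q0 q1 by (intro mult_mono) auto
    then show ?thesis using assms(4) by (intro mult_left_mono pow_le_exp) (auto simp: algebra_simps assms(4))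
  qed
  also have "\<dots> = exp (real a * q * (exp (-l) - 1 + l) - l * D)"
    by (simp add: exp_add[symmetric] algebra_simps)
  also have "\<dots> \<le> exp (real a * Q * l^2 - l * D)"
  proof -
    have "q * (exp (-l) - 1 + l) \<le> Q * l^2"
      using q0 assms(3,4) exp_nl_bound[OF assms(4)] q_def exp_ge_add_one_self[of "-l"]
      by (intro mult_mono) linarith+
    then have "real a * (q * (exp (-l) - 1 + l)) \<le> real a * (Q * l^2)" by (intro mult_left_mono) auto
    then show ?thesis by (simp add: algebra_simps)
  qed
  finally show ?thesis unfolding q_def .
qed



lemma pow_le_exp2: assumes "0 \<le> (x::real)" "x \<le> exp y" shows "x ^ k \<le> exp (real k * y)"
proof -
  have "x ^ k \<le> (exp y) ^ k" using assms by (intro power_mono) auto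
  then show ?thesis by (simp add: exp_of_nat_mult)
qed

lemma tail_W_up:
  assumes "is_dist m \<beta>" "\<forall>j\<in>{1..m}. 0 \<le> \<alpha> j \<and> \<alpha> j \<le> c" "0 \<le> \<theta>" "\<theta> * c \<le> 1"
  shows "(\<Sum>B\<in>seqs m b. seq_prob \<beta> B * ind (real b * ip m \<alpha> \<beta> + D \<le> Wt \<alpha> B))
     \<le> exp (real b * \<theta>^2 * c * ip m \<alpha> \<beta> - \<theta> * D)"
proof -
  define g where "g = ip m \<alpha> \<beta>"
  have "(\<Sum>B\<in>seqs m b. seq_prob \<beta> B * ind (real b * g + D \<le> Wt \<alpha> B))
      \<le> (\<Sum>B\<in>seqs m b. seq_prob \<beta> B * exp (\<theta> * (Wt \<alpha> B - (real b * g + D))))"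
    by (intro chernoff finite_seqs seq_prob_nonneg[OF assms(1)] assms(3)) auto
  also have "\<dots> = exp (- \<theta> * (real b * g + D)) * (\<Sum>B\<in>seqs m b. seq_prob \<beta> B * exp (\<theta> * Wt \<alpha> B))"
    unfolding exp_shift sum_distrib_left by (simp add: mult.left_commute)
  also have "\<dots> = exp (- \<theta> * (real b * g + D)) * (\<Sum>j\<in>{1..m}. \<beta> j * exp (\<theta> * \<alpha> j)) ^ b"
    by (simp add: mgf_Wt)
  also have "\<dots> \<le> exp (- \<theta> * (real b * g + D)) * exp (real b * (\<theta> * g + \<theta>^2 * c * g))"
  proof -
    have "(\<Sum>j\<in>{1..m}. \<beta> j * exp (\<theta> * \<alpha> j)) \<le> (\<Sum>j\<in>{1..m}. \<beta> j + \<theta> * (\<alpha> j * \<beta> j) + \<theta>^2 * c * (\<alpha> j * \<beta> j))"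
    proof (intro sum_mono)
      fix j assume j: "j \<in> {1..m}"
      have b0: "0 \<le> \<beta> j" using assms(1) j by (simp add: is_dist_def)
      have a: "0 \<le> \<alpha> j" "\<alpha> j \<le> c" using assms(2) j by auto
      have x1: "\<theta> * \<alpha> j \<le> 1" using a assms(3,4) by (smt (verit) mult_left_mono)
      have "exp (\<theta> * \<alpha> j) \<le> 1 + \<theta> * \<alpha> j + (\<theta> * \<alpha> j)^2"
        using a assms(3) x1 by (intro exp_bound) auto
      also have "(\<theta> * \<alpha> j)^2 \<le> \<theta>^2 * c * \<alpha> j"
        using a assms(3) by (simp add: power2_eq_square mult_left_mono mult_right_mono mult.assoc mult.left_commute)
      finally have "exp (\<theta> * \<alpha> j) \<le> 1 + \<theta> * \<alpha> j + \<theta>^2 * c * \<alpha> j" by simp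
      then have "\<beta> j * exp (\<theta> * \<alpha> j) \<le> \<beta> j * (1 + \<theta> * \<alpha> j + \<theta>^2 * c * \<alpha> j)"
        using b0 by (intro mult_left_mono) auto
      then show "\<beta> j * exp (\<theta> * \<alpha> j) \<le> \<beta> j + \<theta> * (\<alpha> j * \<beta> j) + \<theta>^2 * c * (\<alpha> j * \<beta> j)"
        by (simp add: algebra_simps)
    qed
    also have "\<dots> = 1 + (\<theta> * g + \<theta>^2 * c * g)"
      using assms(1) by (simp add: sum.distrib sum_distrib_left[symmetric] g_def ip_def is_dist_def)
    also have "\<dots> \<le> exp (\<theta> * g + \<theta>^2 * c * g)" by simp
    finally have "(\<Sum>j\<in>{1..m}. \<beta> j * exp (\<theta> * \<alpha> j)) \<le> exp (\<theta> * g + \<theta>^2 * c * g)" .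
    moreover have "0 \<le> (\<Sum>j\<in>{1..m}. \<beta> j * exp (\<theta> * \<alpha> j))"
      using assms(1) by (intro sum_nonneg) (auto simp: is_dist_def)
    ultimately show ?thesis by (intro mult_left_mono pow_le_exp2) auto
  qed
  also have "\<dots> = exp (real b * \<theta>^2 * c * g - \<theta> * D)"
    by (simp add: exp_add[symmetric] algebra_simps)
  finally show ?thesis unfolding g_def .
qed

lemma tail_W_low:
  assumes "is_dist m \<beta>" "\<forall>j\<in>{1..m}. 0 \<le> \<alpha> j \<and> \<alpha> j \<le> c" "0 \<le> \<theta>"
  shows "(\<Sum>B\<in>seqs m b. seq_prob \<beta> B * ind (Wt \<alpha> B \<le> real b * ip m \<alpha> \<beta> - D))
     \<le> exp (real b * \<theta>^2 * c * ip m \<alpha> \<beta> - \<theta> * D)"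
proof -
  define g where "g = ip m \<alpha> \<beta>"
  have "(\<Sum>B\<in>seqs m b. seq_prob \<beta> B * ind (Wt \<alpha> B \<le> real b * g - D))
      \<le> (\<Sum>B\<in>seqs m b. seq_prob \<beta> B * exp (\<theta> * (- Wt \<alpha> B - (D - real b * g))))"
    by (intro chernoff finite_seqs seq_prob_nonneg[OF assms(1)] assms(3)) auto
  also have "\<dots> = exp (\<theta> * (real b * g - D)) * (\<Sum>B\<in>seqs m b. seq_prob \<beta> B * exp ((-\<theta>) * Wt \<alpha> B))"
    unfolding exp_shift sum_distrib_left by (simp add: mult.left_commute algebra_simps)
  also have "\<dots> = exp (\<theta> * (real b * g - D)) * (\<Sum>j\<in>{1..m}. \<beta> j * exp ((-\<theta>) * \<alpha> j)) ^ b"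
    by (simp only: mgf_Wt)
  also have "\<dots> \<le> exp (\<theta> * (real b * g - D)) * exp (real b * (- \<theta> * g + \<theta>^2 * c * g))"
  proof -
    have "(\<Sum>j\<in>{1..m}. \<beta> j * exp ((-\<theta>) * \<alpha> j)) \<le> (\<Sum>j\<in>{1..m}. \<beta> j - \<theta> * (\<alpha> j * \<beta> j) + \<theta>^2 * c * (\<alpha> j * \<beta> j))"
    proof (intro sum_mono)
      fix j assume j: "j \<in> {1..m}"
      have b0: "0 \<le> \<beta> j" using assms(1) j by (simp add: is_dist_def)
      have a: "0 \<le> \<alpha> j" "\<alpha> j \<le> c" using assms(2) j by auto
      have "exp (- (\<theta> * \<alpha> j)) \<le> 1 - \<theta> * \<alpha> j + (\<theta> * \<alpha> j)^2"
        using a assms(3) by (intro exp_neg_bound) auto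
      also have "(\<theta> * \<alpha> j)^2 \<le> \<theta>^2 * c * \<alpha> j"
        using a assms(3) by (simp add: power2_eq_square mult_left_mono mult_right_mono mult.assoc mult.left_commute)
      finally have "exp ((-\<theta>) * \<alpha> j) \<le> 1 - \<theta> * \<alpha> j + \<theta>^2 * c * \<alpha> j" by simp
      then have "\<beta> j * exp ((-\<theta>) * \<alpha> j) \<le> \<beta> j * (1 - \<theta> * \<alpha> j + \<theta>^2 * c * \<alpha> j)"
        using b0 by (intro mult_left_mono) auto
      then show "\<beta> j * exp ((-\<theta>) * \<alpha> j) \<le> \<beta> j - \<theta> * (\<alpha> j * \<beta> j) + \<theta>^2 * c * (\<alpha> j * \<beta> j)"
        by (simp add: algebra_simps)
    qed
    also have "\<dots> = 1 + (- \<theta> * g + \<theta>^2 * c * g)"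
      using assms(1) by (simp add: sum.distrib sum_subtractf sum_distrib_left[symmetric] g_def ip_def is_dist_def)
    also have "\<dots> \<le> exp (- \<theta> * g + \<theta>^2 * c * g)" by (rule exp_ge_add_one_self)
    finally have "(\<Sum>j\<in>{1..m}. \<beta> j * exp ((-\<theta>) * \<alpha> j)) \<le> exp (- \<theta> * g + \<theta>^2 * c * g)" .
    moreover have "0 \<le> (\<Sum>j\<in>{1..m}. \<beta> j * exp ((-\<theta>) * \<alpha> j))"
      using assms(1) by (intro sum_nonneg) (auto simp: is_dist_def)
    ultimately show ?thesis by (intro mult_left_mono pow_le_exp2) auto
  qed
  also have "\<dots> = exp (real b * \<theta>^2 * c * g - \<theta> * D)"
    by (simp add: exp_add[symmetric] algebra_simps)
  finally show ?thesis unfolding g_def .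
qed

lemma tail_rep:
  assumes "is_dist m \<beta>" "\<forall>j\<in>{1..m}. \<beta> j \<le> c" "0 \<le> c"
  shows "(\<Sum>B\<in>seqs m b. seq_prob \<beta> B * ind (r \<le> real (rep B))) \<le> exp (2 * real b ^ 2 * c - r)"
proof -
  have "(\<Sum>B\<in>seqs m b. seq_prob \<beta> B * ind (r \<le> real (rep B)))
      \<le> (\<Sum>B\<in>seqs m b. seq_prob \<beta> B * exp (1 * (real (rep B) - r)))"
    by (intro chernoff finite_seqs seq_prob_nonneg[OF assms(1)]) auto
  also have "\<dots> = exp (- r) * (\<Sum>B\<in>seqs m b. seq_prob \<beta> B * exp (real (rep B)))"
    unfolding exp_shift sum_distrib_left by (simp add: mult.left_commute)
  also have "\<dots> \<le> exp (- r) * exp (2 * real b ^ 2 * c)"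
    by (intro mult_left_mono mgf_rep assms) auto
  finally show ?thesis by (simp add: exp_add[symmetric])
qed



lemma dev_cases:
  fixes a b x q W g s C R rr :: real
  assumes "0 < a" "0 < b" "q \<le> W" "W \<le> q + C * R" "C * rr = b * s / 4" "0 \<le> C"
    and dev: "s \<le> \<bar>x / (a * b) - g\<bar>"
  shows "a * q + a * b * s / 2 \<le> x \<or> b * g + b * s / 2 \<le> W \<or> x \<le> a * q - a * b * s / 2
         \<or> W \<le> b * g - b * s / 4 \<or> rr \<le> R"
proof -
  have ab: "0 < a * b" using assms by simp
  from dev consider "g + s \<le> x / (a * b)" | "x / (a * b) \<le> g - s" by linarith
  then show ?thesis
  proof cases
    case 1
    then have x: "a * b * (g + s) \<le> x" using ab by (simp add: pos_le_divide_eq mult.commute)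
    show ?thesis
    proof (rule ccontr)
      assume "\<not> ?thesis"
      then have h: "x < a * q + a * b * s / 2" "W < b * g + b * s / 2" by auto
      have "a * (b * g + b * s / 2) < a * q" using x h(1) by (simp add: algebra_simps)
      then have "b * g + b * s / 2 < q" using assms(1) by (simp add: mult_less_cancel_left_pos)
      then show False using h(2) assms(3) by linarith
    qed
  next
    case 2
    then have x: "x \<le> a * b * (g - s)" using ab by (simp add: divide_le_eq mult.commute)
    show ?thesis
    proof (rule ccontr)
      assume "\<not> ?thesis"
      then have h: "a * q - a * b * s / 2 < x" "b * g - b * s / 4 < W" "R < rr" by auto
      have "a * q < a * (b * g - b * s / 2)" using x h(1) by (simp add: algebra_simps)
      then have "q < b * g - b * s / 2" using assms(1) by (simp add: mult_less_cancel_left_pos)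
      moreover have "C * R \<le> C * rr" using h(3) assms(6) by (intro mult_left_mono) auto
      ultimately show False using h(2) assms(4,5) by linarith
    qed
  qed
qed



definition lam1 :: "real \<Rightarrow> real \<Rightarrow> real" where "lam1 c \<eta> = min 1 (\<eta> / (4 * c))"
definition tt :: "real \<Rightarrow> real \<Rightarrow> real" where "tt c \<eta> = min (1 / c) (\<eta> / (8 * c^2))"
definition kap :: "real \<Rightarrow> real \<Rightarrow> real" where
  "kap c \<eta> = min (lam1 c \<eta> * \<eta> / 4) (min (tt c \<eta> * \<eta> / 8) (\<eta> / (8 * c)))"

lemma kap_pos: "0 < c \<Longrightarrow> 0 < \<eta> \<Longrightarrow> 0 < kap c \<eta>"
  unfolding kap_def lam1_def tt_def by auto

lemma ind_le5: "(P \<Longrightarrow> P1 \<or> P2 \<or> P3 \<or> P4 \<or> P5) \<Longrightarrow> ind P \<le> ind P1 + ind P2 + ind P3 + ind P4 + ind P5"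
  by (auto simp: ind_def)

lemma ind_nonneg: "0 \<le> ind P" by (simp add: ind_def)

lemma ip_bounds: assumes "is_dist m \<beta>" "\<forall>j\<in>{1..m}. 0 \<le> \<alpha> j \<and> \<alpha> j \<le> C"
  shows "0 \<le> ip m \<alpha> \<beta>" "ip m \<alpha> \<beta> \<le> C"
proof -
  show "0 \<le> ip m \<alpha> \<beta>" using assms unfolding ip_def is_dist_def by (intro sum_nonneg) auto
  have "ip m \<alpha> \<beta> \<le> (\<Sum>j\<in>{1..m}. C * \<beta> j)" using assms unfolding ip_def is_dist_def
    by (intro sum_mono mult_right_mono) auto
  also have "\<dots> = C" using assms(1) by (simp add: sum_distrib_left[symmetric] is_dist_def)
  finally show "ip m \<alpha> \<beta> \<le> C" .
qed



lemma ex1: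
  assumes "0 < c" "0 < \<eta>" "0 < m" "0 \<le> a" "0 \<le> b"
  shows "a * (b * (c / m)) * (lam1 c \<eta>)^2 - lam1 c \<eta> * (a * b * (\<eta> / m) / 2) \<le> - (kap c \<eta> * (a * b / m))"
proof -
  define l where "l = lam1 c \<eta>"
  define u where "u = a * b / m"
  have u0: "0 \<le> u" using assms by (simp add: u_def)
  have l0: "0 \<le> l" "l \<le> \<eta> / (4 * c)" using assms by (auto simp: l_def lam1_def)
  have "c * l \<le> \<eta> / 4" using l0 assms by (simp add: field_simps)
  then have "c * l * l \<le> \<eta> / 4 * l" using l0 by (intro mult_right_mono) auto
  moreover have "kap c \<eta> \<le> l * \<eta> / 4" by (simp add: kap_def l_def)
  ultimately have k: "c * l^2 - l * \<eta> / 2 \<le> - kap c \<eta>" by (simp add: power2_eq_square algebra_simps)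
  have "a * (b * (c / m)) * l^2 - l * (a * b * (\<eta> / m) / 2) = u * (c * l^2 - l * \<eta> / 2)"
    using assms(3) by (simp add: u_def field_simps power2_eq_square)
  also have "\<dots> \<le> u * (- kap c \<eta>)" using u0 k by (intro mult_left_mono) auto
  finally show ?thesis by (simp add: u_def l_def mult.commute)
qed

lemma ex2:
  assumes "0 < c" "0 < \<eta>" "0 < m" "0 \<le> b" "0 \<le> g" "g \<le> c / m" "0 < d" "d \<le> 4"
  shows "b * (tt c \<eta> * m)^2 * (c / m) * g - tt c \<eta> * m * (b * (\<eta> / m) / d) \<le> - (kap c \<eta> * b)"
proof -
  define t where "t = tt c \<eta>"
  have t0: "0 \<le> t" "t \<le> \<eta> / (8 * c^2)" using assms by (auto simp: t_def tt_def)
  have "(c / m) * g \<le> (c / m) * (c / m)" using assms by (intro mult_left_mono) auto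
  then have "b * (t * m)^2 * ((c / m) * g) \<le> b * (t * m)^2 * ((c / m) * (c / m))"
    using assms by (intro mult_left_mono) auto
  also have "\<dots> = b * (t * (t * c^2))" using assms by (simp add: field_simps power2_eq_square)
  also have "\<dots> \<le> b * (t * (\<eta> / 8))"
  proof -
    have "t * c^2 \<le> \<eta> / 8" using t0 assms by (simp add: field_simps)
    then show ?thesis using t0 assms by (intro mult_left_mono) auto
  qed
  finally have A: "b * (t * m)^2 * (c / m) * g \<le> b * (t * (\<eta> / 8))" by (simp add: mult.assoc)
  have B: "t * m * (b * (\<eta> / m) / d) = b * (t * \<eta> / d)" using assms by (simp add: field_simps)
  have "t * \<eta> / 4 \<le> t * \<eta> / d" using assms t0 by (intro divide_left_mono) auto
  then have "b * (t * \<eta> / 4) \<le> b * (t * \<eta> / d)" using assms by (intro mult_left_mono) auto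
  then have "b * (t * (\<eta> / 8)) - b * (t * \<eta> / d) \<le> b * (- (t * \<eta> / 8))"
    by (simp add: algebra_simps)
  moreover have "kap c \<eta> \<le> t * \<eta> / 8" by (simp add: kap_def t_def)
  then have "b * kap c \<eta> \<le> b * (t * \<eta> / 8)" using assms by (intro mult_left_mono) auto
  then have "b * (- (t * \<eta> / 8)) \<le> - (kap c \<eta> * b)" by (simp add: mult.commute)
  ultimately show ?thesis using A B unfolding t_def by linarith
qed

lemma ex5:
  assumes "0 < c" "0 < \<eta>" "0 < m" "0 \<le> b" "b \<le> \<eta> * m / (16 * c^2)"
  shows "2 * b ^ 2 * (c / m) - b * \<eta> / (4 * c) \<le> - (kap c \<eta> * b)"
proof -
  have "2 * b * (c / m) \<le> \<eta> / (8 * c)"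
    using assms by (simp add: field_simps power2_eq_square)
  then have "b * (2 * b * (c / m)) \<le> b * (\<eta> / (8 * c))" using assms by (intro mult_left_mono) auto
  moreover have "kap c \<eta> \<le> \<eta> / (8 * c)" by (simp add: kap_def)
  then have "b * kap c \<eta> \<le> b * (\<eta> / (8 * c))" using assms by (intro mult_left_mono) auto
  moreover have "b * \<eta> / (4 * c) = 2 * (b * (\<eta> / (8 * c)))" using assms by (simp add: field_simps)
  ultimately show ?thesis by (simp add: power2_eq_square algebra_simps)
qed



lemma dev:
  assumes da: "is_dist m \<alpha>" and db: "is_dist m \<beta>"
    and ma: "\<forall>j\<in>{1..m}. \<alpha> j \<le> c / real m" and mb: "\<forall>j\<in>{1..m}. \<beta> j \<le> c / real m"
    and c0: "0 < c" and e0: "0 < \<eta>" and m0: "0 < m"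
    and a1: "1 \<le> a" and am: "a \<le> m" and b1: "1 \<le> b" and bm: "real b \<le> \<eta> * real m / (16 * c^2)"
  shows "(\<Sum>A\<in>seqs m a. \<Sum>B\<in>seqs m b. seq_prob \<alpha> A * seq_prob \<beta> B *
            ind (\<eta> / real m \<le> \<bar>real (cnt A B) / (real a * real b) - ip m \<alpha> \<beta>\<bar>))
         \<le> 5 * exp (- (kap c \<eta> * (real a * real b / real m)))"
proof -
  define C where "C = c / real m"
  define s where "s = \<eta> / real m"
  define g where "g = ip m \<alpha> \<beta>"
  define rr where "rr = real b * \<eta> / (4 * c)"
  define K where "K = exp (- (kap c \<eta> * (real a * real b / real m)))"
  have C0: "0 \<le> C" using c0 by (simp add: C_def)
  have a0: "\<forall>j\<in>{1..m}. 0 \<le> \<alpha> j \<and> \<alpha> j \<le> C" using da ma by (auto simp: is_dist_def C_def)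
  have b0: "\<forall>j\<in>{1..m}. \<beta> j \<le> C" using mb by (simp add: C_def)
  have g0: "0 \<le> g" "g \<le> C" using ip_bounds[OF db a0] by (auto simp: g_def)
  have bab: "real a * real b / real m \<le> real b"
  proof -
    have "real a * real b \<le> real m * real b" using am by (intro mult_right_mono) auto
    then show ?thesis using m0 by (simp add: field_simps)
  qed
  have kexp: "exp (- (kap c \<eta> * real b)) \<le> K"
  proof -
    have "kap c \<eta> * (real a * real b / real m) \<le> kap c \<eta> * real b"
      using kap_pos[OF c0 e0] bab by (intro mult_left_mono) auto
    then show ?thesis unfolding K_def by simp
  qed
  define E1 where "E1 A B = (real a * qm \<alpha> B + real a * real b * s / 2 \<le> real (cnt A B))" for A B
  define E3 where "E3 A B = (real (cnt A B) \<le> real a * qm \<alpha> B - real a * real b * s / 2)" for A B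
  define E2 where "E2 B = (real b * g + real b * s / 2 \<le> Wt \<alpha> B)" for B
  define E4 where "E4 B = (Wt \<alpha> B \<le> real b * g - real b * s / 4)" for B
  define E5 where "E5 B = (rr \<le> real (rep B))" for B
  have point: "ind (\<eta> / real m \<le> \<bar>real (cnt A B) / (real a * real b) - g\<bar>)
      \<le> ind (E1 A B) + ind (E2 B) + ind (E3 A B) + ind (E4 B) + ind (E5 B)"
    if A: "A \<in> seqs m a" and B: "B \<in> seqs m b" for A B
  proof (rule ind_le5)
    assume d: "\<eta> / real m \<le> \<bar>real (cnt A B) / (real a * real b) - g\<bar>"
    have sB: "set B \<subseteq> {1..m}" using seqs_set[OF B] .
    have "qm \<alpha> B \<le> Wt \<alpha> B" using a0 sB by (intro qm_le_Wt) auto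
    moreover have "Wt \<alpha> B \<le> qm \<alpha> B + C * real (rep B)" using a0 sB by (intro Wt_le_qm_rep) auto
    moreover have "C * rr = real b * s / 4" using c0 by (simp add: C_def rr_def s_def field_simps)
    ultimately show "E1 A B \<or> E2 B \<or> E3 A B \<or> E4 B \<or> E5 B"
      unfolding E1_def E2_def E3_def E4_def E5_def
      using dev_cases[of "real a" "real b" "qm \<alpha> B" "Wt \<alpha> B" C "rep B" rr "s" "real (cnt A B)" g] a1 b1 C0 d
      by (simp add: s_def)
  qed
  have S13: "(\<Sum>A\<in>seqs m a. seq_prob \<alpha> A * (ind (E1 A B) + ind (E3 A B))) \<le> 2 * K"
    if B: "B \<in> seqs m b" for B
  proof -
    have sB: "set B \<subseteq> {1..m}" using seqs_set[OF B] .
    have Q: "qm \<alpha> B \<le> real b * C" using qm_le_card[of m \<alpha> C B] a0 sB C0 seqs_len[OF B] by auto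
    have l: "0 \<le> lam1 c \<eta>" "lam1 c \<eta> \<le> 1" using c0 e0 by (auto simp: lam1_def)
    have ex: "exp (real a * (real b * C) * (lam1 c \<eta>)^2 - lam1 c \<eta> * (real a * real b * s / 2)) \<le> K"
      unfolding K_def C_def s_def using ex1[of c \<eta> "real m" "real a" "real b"] c0 e0 m0
      by (simp add: mult.assoc)
    have "(\<Sum>A\<in>seqs m a. seq_prob \<alpha> A * ind (E1 A B)) \<le> K"
      using tail_cnt_up[OF da sB Q l, of a "real a * real b * s / 2"] ex unfolding E1_def by linarith
    moreover have "(\<Sum>A\<in>seqs m a. seq_prob \<alpha> A * ind (E3 A B)) \<le> K"
      using tail_cnt_low[OF da sB Q l(1), of a "real a * real b * s / 2"] ex unfolding E3_def by linarith
    ultimately show ?thesis by (simp add: distrib_left sum.distrib)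
  qed
  have S2: "(\<Sum>B\<in>seqs m b. seq_prob \<beta> B * ind (E2 B)) \<le> K"
  proof -
    have tc: "tt c \<eta> * c \<le> (1 / c) * c" using c0 by (intro mult_right_mono) (auto simp: tt_def)
    have t: "0 \<le> tt c \<eta> * real m" "tt c \<eta> * real m * C \<le> 1"
      using c0 e0 m0 tc by (auto simp: tt_def C_def)
    have "(\<Sum>B\<in>seqs m b. seq_prob \<beta> B * ind (E2 B))
       \<le> exp (real b * (tt c \<eta> * real m)^2 * C * g - tt c \<eta> * real m * (real b * s / 2))"
      using tail_W_up[OF db a0 t, of b "real b * s / 2"] unfolding E2_def g_def by simp
    also have "\<dots> \<le> exp (- (kap c \<eta> * real b))"
      using ex2[of c \<eta> "real m" "real b" g 2] c0 e0 m0 g0 unfolding C_def s_def by simp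
    finally show ?thesis using kexp by linarith
  qed
  have S4: "(\<Sum>B\<in>seqs m b. seq_prob \<beta> B * ind (E4 B)) \<le> K"
  proof -
    have t: "0 \<le> tt c \<eta> * real m"
      using c0 e0 m0 by (auto simp: tt_def)
    have "(\<Sum>B\<in>seqs m b. seq_prob \<beta> B * ind (E4 B))
       \<le> exp (real b * (tt c \<eta> * real m)^2 * C * g - tt c \<eta> * real m * (real b * s / 4))"
      using tail_W_low[OF db a0 t, of b "real b * s / 4"] unfolding E4_def g_def by simp
    also have "\<dots> \<le> exp (- (kap c \<eta> * real b))"
      using ex2[of c \<eta> "real m" "real b" g 4] c0 e0 m0 g0 unfolding C_def s_def by simp
    finally show ?thesis using kexp by linarith
  qed
  have S5: "(\<Sum>B\<in>seqs m b. seq_prob \<beta> B * ind (E5 B)) \<le> K"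
  proof -
    have "(\<Sum>B\<in>seqs m b. seq_prob \<beta> B * ind (E5 B)) \<le> exp (2 * real b ^ 2 * C - rr)"
      using tail_rep[OF db b0 C0] unfolding E5_def by simp
    also have "\<dots> \<le> exp (- (kap c \<eta> * real b))"
      using ex5[of c \<eta> "real m" "real b"] c0 e0 m0 bm unfolding C_def rr_def by simp
    finally show ?thesis using kexp by linarith
  qed
  have pA: "(\<Sum>A\<in>seqs m a. seq_prob \<alpha> A) = 1" using seq_prob_total[OF da] .
  have "(\<Sum>A\<in>seqs m a. \<Sum>B\<in>seqs m b. seq_prob \<alpha> A * seq_prob \<beta> B *
            ind (\<eta> / real m \<le> \<bar>real (cnt A B) / (real a * real b) - g\<bar>))
     \<le> (\<Sum>A\<in>seqs m a. \<Sum>B\<in>seqs m b. seq_prob \<alpha> A * seq_prob \<beta> B *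
            (ind (E1 A B) + ind (E2 B) + ind (E3 A B) + ind (E4 B) + ind (E5 B)))"
    by (intro sum_mono mult_left_mono point mult_nonneg_nonneg seq_prob_nonneg[OF da] seq_prob_nonneg[OF db]) auto
  also have "\<dots> = (\<Sum>B\<in>seqs m b. seq_prob \<beta> B * (\<Sum>A\<in>seqs m a. seq_prob \<alpha> A * (ind (E1 A B) + ind (E3 A B))))
      + (\<Sum>A\<in>seqs m a. seq_prob \<alpha> A) * (\<Sum>B\<in>seqs m b. seq_prob \<beta> B * ind (E2 B))
      + (\<Sum>A\<in>seqs m a. seq_prob \<alpha> A) * (\<Sum>B\<in>seqs m b. seq_prob \<beta> B * ind (E4 B))
      + (\<Sum>A\<in>seqs m a. seq_prob \<alpha> A) * (\<Sum>B\<in>seqs m b. seq_prob \<beta> B * ind (E5 B))"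
    apply (subst sum.swap)
    apply (simp add: sum_distrib_left sum_distrib_right sum.distrib algebra_simps)
    done
  also have "\<dots> \<le> (\<Sum>B\<in>seqs m b. seq_prob \<beta> B * (2 * K)) + K + K + K"
  proof -
    have "(\<Sum>B\<in>seqs m b. seq_prob \<beta> B * (\<Sum>A\<in>seqs m a. seq_prob \<alpha> A * (ind (E1 A B) + ind (E3 A B))))
        \<le> (\<Sum>B\<in>seqs m b. seq_prob \<beta> B * (2 * K))"
      by (intro sum_mono mult_left_mono S13 seq_prob_nonneg[OF db]) auto
    then show ?thesis unfolding pA using S2 S4 S5 by linarith
  qed
  also have "\<dots> = 5 * K" by (simp add: sum_distrib_right[symmetric] seq_prob_total[OF db])
  finally show ?thesis unfolding g_def K_def .
qed



lemma marg_split: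
  assumes "h \<le> N"
  shows "(\<Sum>y\<in>seqs m N. seq_prob p y * f (take h y) (drop h y))
       = (\<Sum>a\<in>seqs m h. \<Sum>b\<in>seqs m (N - h). seq_prob p a * seq_prob p b * f a b)"
proof -
  have N: "N = h + (N - h)" using assms by simp
  have "(\<Sum>y\<in>seqs m N. seq_prob p y * f (take h y) (drop h y))
      = (\<Sum>y\<in>seqs m (h + (N - h)). seq_prob p y * f (take h y) (drop h y))" using N by simp
  also have "\<dots> = (\<Sum>a\<in>seqs m h. \<Sum>b\<in>seqs m (N - h). seq_prob p a * seq_prob p b * f a b)"
    unfolding sum_seqs_append
    by (intro sum.cong refl) (auto simp: seq_prob_append seqs_len)
  finally show ?thesis .
qed

lemma marg_take:
  assumes "h \<le> N" "is_dist m p"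
  shows "(\<Sum>y\<in>seqs m N. seq_prob p y * f (take h y)) = (\<Sum>a\<in>seqs m h. seq_prob p a * f a)"
proof -
  have "(\<Sum>y\<in>seqs m N. seq_prob p y * f (take h y))
       = (\<Sum>a\<in>seqs m h. \<Sum>b\<in>seqs m (N - h). seq_prob p a * seq_prob p b * f a)"
    using marg_split[OF assms(1), where m=m and p=p and f="\<lambda>a b. f a"] .
  also have "\<dots> = (\<Sum>a\<in>seqs m h. seq_prob p a * f a * (\<Sum>b\<in>seqs m (N - h). seq_prob p b))"
    by (simp add: sum_distrib_left algebra_simps)
  also have "\<dots> = (\<Sum>a\<in>seqs m h. seq_prob p a * f a)" using seq_prob_total[OF assms(2)] by simp
  finally show ?thesis .
qed

definition Fst :: "nat list \<Rightarrow> nat list \<Rightarrow> real" where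
  "Fst A B = real (cnt A B) / (real (length A) * real (length B))"

definition Tst :: "nat \<Rightarrow> nat list \<Rightarrow> nat list \<Rightarrow> nat list \<Rightarrow> real" where
  "Tst h x y z = Fst z (take h y) - Fst z (take h x) - (Fst (take h y) (drop h y) - Fst (take h x) (drop h x)) / 2"

lemma trip_x:
  "(\<Sum>x\<in>X. \<Sum>y\<in>Y. \<Sum>z\<in>Z. (p::nat list\<Rightarrow>real) x * q y * r z * F y z)
     = (\<Sum>x\<in>X. p x) * (\<Sum>y\<in>Y. \<Sum>z\<in>Z. q y * r z * F y z)"
proof -
  have "(\<Sum>x\<in>X. \<Sum>y\<in>Y. \<Sum>z\<in>Z. p x * q y * r z * F y z) = (\<Sum>x\<in>X. p x * (\<Sum>y\<in>Y. \<Sum>z\<in>Z. q y * r z * F y z))"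
    by (simp add: sum_distrib_left mult.assoc)
  also have "\<dots> = (\<Sum>x\<in>X. p x) * (\<Sum>y\<in>Y. \<Sum>z\<in>Z. q y * r z * F y z)"
    by (simp add: sum_distrib_right)
  finally show ?thesis .
qed

lemma trip_y:
  "(\<Sum>x\<in>X. \<Sum>y\<in>Y. \<Sum>z\<in>Z. (p::nat list\<Rightarrow>real) x * q y * r z * F x z)
     = (\<Sum>y\<in>Y. q y) * (\<Sum>x\<in>X. \<Sum>z\<in>Z. p x * r z * F x z)"
proof -
  have "(\<Sum>x\<in>X. \<Sum>y\<in>Y. \<Sum>z\<in>Z. p x * q y * r z * F x z) = (\<Sum>x\<in>X. \<Sum>y\<in>Y. q y * (\<Sum>z\<in>Z. p x * r z * F x z))"
    by (simp add: sum_distrib_left algebra_simps)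
  also have "\<dots> = (\<Sum>x\<in>X. (\<Sum>y\<in>Y. q y) * (\<Sum>z\<in>Z. p x * r z * F x z))"
    by (simp add: sum_distrib_right)
  also have "\<dots> = (\<Sum>y\<in>Y. q y) * (\<Sum>x\<in>X. \<Sum>z\<in>Z. p x * r z * F x z)"
    by (simp add: sum_distrib_left)
  finally show ?thesis .
qed

lemma pair_swap:
  "(\<Sum>y\<in>Y. \<Sum>z\<in>Z. (q::nat list\<Rightarrow>real) y * r z * G z y) = (\<Sum>z\<in>Z. r z * (\<Sum>y\<in>Y. q y * G z y))"
proof -
  have "(\<Sum>y\<in>Y. \<Sum>z\<in>Z. q y * r z * G z y) = (\<Sum>z\<in>Z. \<Sum>y\<in>Y. q y * r z * G z y)" by (rule sum.swap)
  also have "\<dots> = (\<Sum>z\<in>Z. r z * (\<Sum>y\<in>Y. q y * G z y))" by (simp add: sum_distrib_left algebra_simps)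
  finally show ?thesis .
qed

lemma sum3_marg_zy:
  assumes "is_dist m \<pi>" "is_dist m \<mu>" "h \<le> N"
  shows "(\<Sum>x\<in>seqs m N. \<Sum>y\<in>seqs m N. \<Sum>z\<in>seqs m n. seq_prob \<pi> x * seq_prob \<mu> y * seq_prob \<nu> z * ind (P z (take h y)))
       = (\<Sum>z\<in>seqs m n. \<Sum>b\<in>seqs m h. seq_prob \<nu> z * seq_prob \<mu> b * ind (P z b))"
proof -
  have "(\<Sum>x\<in>seqs m N. \<Sum>y\<in>seqs m N. \<Sum>z\<in>seqs m n. seq_prob \<pi> x * seq_prob \<mu> y * seq_prob \<nu> z * ind (P z (take h y)))
      = (\<Sum>y\<in>seqs m N. \<Sum>z\<in>seqs m n. seq_prob \<mu> y * seq_prob \<nu> z * ind (P z (take h y)))"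
    by (simp only: trip_x seq_prob_total[OF assms(1)] mult_1_left)
  also have "\<dots> = (\<Sum>z\<in>seqs m n. seq_prob \<nu> z * (\<Sum>y\<in>seqs m N. seq_prob \<mu> y * ind (P z (take h y))))"
    by (rule pair_swap)
  also have "\<dots> = (\<Sum>z\<in>seqs m n. seq_prob \<nu> z * (\<Sum>b\<in>seqs m h. seq_prob \<mu> b * ind (P z b)))"
    by (intro sum.cong refl arg_cong2[where f=times] marg_take[OF assms(3,2), where f="\<lambda>b. ind (P _ b)"])
  also have "\<dots> = (\<Sum>z\<in>seqs m n. \<Sum>b\<in>seqs m h. seq_prob \<nu> z * seq_prob \<mu> b * ind (P z b))"
    by (simp add: sum_distrib_left algebra_simps)
  finally show ?thesis .
qed

lemma sum3_marg_zx:
  assumes "is_dist m \<pi>" "is_dist m \<mu>" "h \<le> N"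
  shows "(\<Sum>x\<in>seqs m N. \<Sum>y\<in>seqs m N. \<Sum>z\<in>seqs m n. seq_prob \<pi> x * seq_prob \<mu> y * seq_prob \<nu> z * ind (P z (take h x)))
       = (\<Sum>z\<in>seqs m n. \<Sum>b\<in>seqs m h. seq_prob \<nu> z * seq_prob \<pi> b * ind (P z b))"
proof -
  have "(\<Sum>x\<in>seqs m N. \<Sum>y\<in>seqs m N. \<Sum>z\<in>seqs m n. seq_prob \<pi> x * seq_prob \<mu> y * seq_prob \<nu> z * ind (P z (take h x)))
      = (\<Sum>x\<in>seqs m N. \<Sum>z\<in>seqs m n. seq_prob \<pi> x * seq_prob \<nu> z * ind (P z (take h x)))"
    by (simp only: trip_y seq_prob_total[OF assms(2)] mult_1_left)
  also have "\<dots> = (\<Sum>z\<in>seqs m n. seq_prob \<nu> z * (\<Sum>x\<in>seqs m N. seq_prob \<pi> x * ind (P z (take h x))))"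
    by (rule pair_swap)
  also have "\<dots> = (\<Sum>z\<in>seqs m n. seq_prob \<nu> z * (\<Sum>b\<in>seqs m h. seq_prob \<pi> b * ind (P z b)))"
    by (intro sum.cong refl arg_cong2[where f=times] marg_take[OF assms(3,1), where f="\<lambda>b. ind (P _ b)"])
  also have "\<dots> = (\<Sum>z\<in>seqs m n. \<Sum>b\<in>seqs m h. seq_prob \<nu> z * seq_prob \<pi> b * ind (P z b))"
    by (simp add: sum_distrib_left algebra_simps)
  finally show ?thesis .
qed

lemma sum3_marg_y:
  assumes "is_dist m \<pi>" "is_dist m \<nu>" "h \<le> N"
  shows "(\<Sum>x\<in>seqs m N. \<Sum>y\<in>seqs m N. \<Sum>z\<in>seqs m n. seq_prob \<pi> x * seq_prob \<mu> y * seq_prob \<nu> z * ind (P (take h y) (drop h y)))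
       = (\<Sum>a\<in>seqs m h. \<Sum>b\<in>seqs m (N - h). seq_prob \<mu> a * seq_prob \<mu> b * ind (P a b))"
proof -
  have "(\<Sum>x\<in>seqs m N. \<Sum>y\<in>seqs m N. \<Sum>z\<in>seqs m n. seq_prob \<pi> x * seq_prob \<mu> y * seq_prob \<nu> z * ind (P (take h y) (drop h y)))
      = (\<Sum>y\<in>seqs m N. \<Sum>z\<in>seqs m n. seq_prob \<mu> y * seq_prob \<nu> z * ind (P (take h y) (drop h y)))"
    unfolding trip_x seq_prob_total[OF assms(1)] by simp
  also have "\<dots> = (\<Sum>z\<in>seqs m n. seq_prob \<nu> z * (\<Sum>y\<in>seqs m N. seq_prob \<mu> y * ind (P (take h y) (drop h y))))"
    by (rule pair_swap)
  also have "\<dots> = (\<Sum>y\<in>seqs m N. seq_prob \<mu> y * ind (P (take h y) (drop h y)))"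
    by (simp add: sum_distrib_right[symmetric] seq_prob_total[OF assms(2)])
  also have "\<dots> = (\<Sum>a\<in>seqs m h. \<Sum>b\<in>seqs m (N - h). seq_prob \<mu> a * seq_prob \<mu> b * ind (P a b))"
    by (rule marg_split[OF assms(3)])
  finally show ?thesis .
qed

lemma sum3_marg_x:
  assumes "is_dist m \<mu>" "is_dist m \<nu>" "h \<le> N"
  shows "(\<Sum>x\<in>seqs m N. \<Sum>y\<in>seqs m N. \<Sum>z\<in>seqs m n. seq_prob \<pi> x * seq_prob \<mu> y * seq_prob \<nu> z * ind (P (take h x) (drop h x)))
       = (\<Sum>a\<in>seqs m h. \<Sum>b\<in>seqs m (N - h). seq_prob \<pi> a * seq_prob \<pi> b * ind (P a b))"
proof -
  have "(\<Sum>x\<in>seqs m N. \<Sum>y\<in>seqs m N. \<Sum>z\<in>seqs m n. seq_prob \<pi> x * seq_prob \<mu> y * seq_prob \<nu> z * ind (P (take h x) (drop h x)))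
      = (\<Sum>x\<in>seqs m N. \<Sum>z\<in>seqs m n. seq_prob \<pi> x * seq_prob \<nu> z * ind (P (take h x) (drop h x)))"
    unfolding trip_y seq_prob_total[OF assms(1)] by simp
  also have "\<dots> = (\<Sum>z\<in>seqs m n. seq_prob \<nu> z * (\<Sum>x\<in>seqs m N. seq_prob \<pi> x * ind (P (take h x) (drop h x))))"
    by (rule pair_swap)
  also have "\<dots> = (\<Sum>x\<in>seqs m N. seq_prob \<pi> x * ind (P (take h x) (drop h x)))"
    by (simp add: sum_distrib_right[symmetric] seq_prob_total[OF assms(2)])
  also have "\<dots> = (\<Sum>a\<in>seqs m h. \<Sum>b\<in>seqs m (N - h). seq_prob \<pi> a * seq_prob \<pi> b * ind (P a b))"
    by (rule marg_split[OF assms(3)])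
  finally show ?thesis .
qed



lemma ind_le4: "(P \<Longrightarrow> P1 \<or> P2 \<or> P3 \<or> P4) \<Longrightarrow> ind P \<le> ind P1 + ind P2 + ind P3 + ind P4"
  by (auto simp: ind_def)

lemma h_facts: assumes "3 \<le> N" shows "real N \<le> 3 * real (N div 2)" "real N \<le> 2 * real (N - N div 2)"
  "1 \<le> N div 2" "N div 2 \<le> N"
proof -
  have "N \<le> 3 * (N div 2)" using assms by linarith
  then show "real N \<le> 3 * real (N div 2)" by linarith
  have "N \<le> 2 * (N - N div 2)" by linarith
  then show "real N \<le> 2 * real (N - N div 2)" by linarith
  show "1 \<le> N div 2" using assms by linarith
  show "N div 2 \<le> N" by simp
qed

lemma dev':
  assumes da: "is_dist m \<alpha>" and db: "is_dist m \<beta>"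
    and ma: "\<forall>j\<in>{1..m}. \<alpha> j \<le> c / real m" and mb: "\<forall>j\<in>{1..m}. \<beta> j \<le> c / real m"
    and c0: "0 < c" and e0: "0 < \<eta>" and m0: "0 < m"
    and a1: "1 \<le> a" and am: "a \<le> m" and b1: "1 \<le> b" and bm: "real b \<le> \<eta> * real m / (16 * c^2)"
    and R: "R \<le> real a * real b / real m"
  shows "(\<Sum>A\<in>seqs m a. \<Sum>B\<in>seqs m b. seq_prob \<alpha> A * seq_prob \<beta> B *
            ind (\<eta> / real m \<le> \<bar>Fst A B - ip m \<alpha> \<beta>\<bar>))
         \<le> 5 * exp (- (kap c \<eta> * R))"
proof -
  have "(\<Sum>A\<in>seqs m a. \<Sum>B\<in>seqs m b. seq_prob \<alpha> A * seq_prob \<beta> B *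
            ind (\<eta> / real m \<le> \<bar>Fst A B - ip m \<alpha> \<beta>\<bar>))
      = (\<Sum>A\<in>seqs m a. \<Sum>B\<in>seqs m b. seq_prob \<alpha> A * seq_prob \<beta> B *
            ind (\<eta> / real m \<le> \<bar>real (cnt A B) / (real a * real b) - ip m \<alpha> \<beta>\<bar>))"
    by (intro sum.cong refl) (auto simp: Fst_def seqs_len)
  also have "\<dots> \<le> 5 * exp (- (kap c \<eta> * (real a * real b / real m)))"
    by (rule dev[OF assms(1-11)])
  also have "\<dots> \<le> 5 * exp (- (kap c \<eta> * R))"
  proof -
    have "kap c \<eta> * R \<le> kap c \<eta> * (real a * real b / real m)"
      using kap_pos[OF c0 e0] R by (intro mult_left_mono) auto
    then show ?thesis by simp
  qed
  finally show ?thesis .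
qed

lemma err_side:
  fixes m N n :: nat and c \<eta> :: real
  defines "h \<equiv> N div 2"
  defines "R \<equiv> min (real N ^ 2) (real N * real n) / real m / 6"
  assumes dp: "is_dist m \<pi>" and dm: "is_dist m \<mu>" and dn: "is_dist m \<nu>"
    and mp: "\<forall>j\<in>{1..m}. \<pi> j \<le> c / real m" and mm: "\<forall>j\<in>{1..m}. \<mu> j \<le> c / real m"
    and mn: "\<forall>j\<in>{1..m}. \<nu> j \<le> c / real m"
    and c0: "0 < c" and e0: "0 < \<eta>" and m0: "0 < m"
    and N3: "3 \<le> N" and n1: "1 \<le> n" and nm: "n \<le> m" and Nm: "N \<le> m"
    and Nsmall: "real N \<le> \<eta> * real m / (16 * c^2)"
    and pt: "\<And>x y z. x \<in> seqs m N \<Longrightarrow> y \<in> seqs m N \<Longrightarrow> z \<in> seqs m n \<Longrightarrow> \<phi> x y z = b \<Longrightarrow>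
        \<eta> / real m \<le> \<bar>Fst z (take h y) - ip m \<nu> \<mu>\<bar> \<or> \<eta> / real m \<le> \<bar>Fst z (take h x) - ip m \<nu> \<pi>\<bar>
        \<or> \<eta> / real m \<le> \<bar>Fst (take h y) (drop h y) - ip m \<mu> \<mu>\<bar> \<or> \<eta> / real m \<le> \<bar>Fst (take h x) (drop h x) - ip m \<pi> \<pi>\<bar>"
  shows "prob_decide m N n \<phi> b \<pi> \<mu> \<nu> \<le> 20 * exp (- (kap c \<eta> * R))"
proof -
  note hf = h_facts[OF N3, folded h_def]
  define s where "s = \<eta> / real m"
  define p where "p x y z = seq_prob \<pi> x * seq_prob \<mu> y * seq_prob \<nu> z" for x y z
  have p0: "0 \<le> p x y z" if "x \<in> seqs m N" "y \<in> seqs m N" "z \<in> seqs m n" for x y z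
    unfolding p_def using that by (intro mult_nonneg_nonneg seq_prob_nonneg[OF dp] seq_prob_nonneg[OF dm] seq_prob_nonneg[OF dn]) auto
  have Rpos: "0 \<le> R" unfolding R_def by simp
  have Nr: "real N \<le> real m" using Nm by simp
  have mr: "0 < real m" using m0 by simp
  have Rle1: "R \<le> real n * real h / real m"
  proof -
    have "min (real N ^ 2) (real N * real n) \<le> real N * real n" by simp
    also have "\<dots> \<le> 3 * real h * real n" using hf(1) by (intro mult_right_mono) auto
    finally have X: "min (real N ^ 2) (real N * real n) \<le> 3 * (real n * real h)" by (simp add: mult.commute mult.left_commute)
    have "0 \<le> real n * real h" by simp
    then have "min (real N ^ 2) (real N * real n) / 6 \<le> real n * real h" using X by linarith
    then show ?thesis unfolding R_def using mr by (simp add: divide_right_mono field_simps)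
  qed
  have Rle2: "R \<le> real h * real (N - h) / real m"
  proof -
    have "min (real N ^ 2) (real N * real n) \<le> real N * real N" by (simp add: power2_eq_square)
    also have "\<dots> \<le> (3 * real h) * (2 * real (N - h))" using hf(1,2) by (intro mult_mono) auto
    finally have "min (real N ^ 2) (real N * real n) / 6 \<le> real h * real (N - h)" by simp
    then show ?thesis unfolding R_def using mr by (simp add: divide_right_mono field_simps)
  qed
  have hsmall: "real h \<le> \<eta> * real m / (16 * c^2)" using hf(4) Nsmall by (meson of_nat_le_iff order_trans)
  have Nhsmall: "real (N - h) \<le> \<eta> * real m / (16 * c^2)" using Nsmall by (meson diff_le_self of_nat_le_iff order_trans)
  have Nh1: "1 \<le> N - h" using N3 unfolding h_def by linarith
  have hm: "h \<le> m" using hf(4) Nm by linarith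
  have "prob_decide m N n \<phi> b \<pi> \<mu> \<nu> = (\<Sum>x\<in>seqs m N. \<Sum>y\<in>seqs m N. \<Sum>z\<in>seqs m n. p x y z * ind (\<phi> x y z = b))"
    unfolding prob_decide_def p_def ind_def by (intro sum.cong refl) auto
  also have "\<dots> \<le> (\<Sum>x\<in>seqs m N. \<Sum>y\<in>seqs m N. \<Sum>z\<in>seqs m n. p x y z *
      (ind (s \<le> \<bar>Fst z (take h y) - ip m \<nu> \<mu>\<bar>) + ind (s \<le> \<bar>Fst z (take h x) - ip m \<nu> \<pi>\<bar>)
       + ind (s \<le> \<bar>Fst (take h y) (drop h y) - ip m \<mu> \<mu>\<bar>) + ind (s \<le> \<bar>Fst (take h x) (drop h x) - ip m \<pi> \<pi>\<bar>)))"
    by (intro sum_mono mult_left_mono ind_le4 p0) (auto simp: s_def dest: pt)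
  also have "\<dots> = (\<Sum>x\<in>seqs m N. \<Sum>y\<in>seqs m N. \<Sum>z\<in>seqs m n. p x y z * ind (s \<le> \<bar>Fst z (take h y) - ip m \<nu> \<mu>\<bar>))
     + (\<Sum>x\<in>seqs m N. \<Sum>y\<in>seqs m N. \<Sum>z\<in>seqs m n. p x y z * ind (s \<le> \<bar>Fst z (take h x) - ip m \<nu> \<pi>\<bar>))
     + (\<Sum>x\<in>seqs m N. \<Sum>y\<in>seqs m N. \<Sum>z\<in>seqs m n. p x y z * ind (s \<le> \<bar>Fst (take h y) (drop h y) - ip m \<mu> \<mu>\<bar>))
     + (\<Sum>x\<in>seqs m N. \<Sum>y\<in>seqs m N. \<Sum>z\<in>seqs m n. p x y z * ind (s \<le> \<bar>Fst (take h x) (drop h x) - ip m \<pi> \<pi>\<bar>))"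
    by (simp add: sum.distrib distrib_left)
  also have "\<dots> = (\<Sum>z\<in>seqs m n. \<Sum>B\<in>seqs m h. seq_prob \<nu> z * seq_prob \<mu> B * ind (s \<le> \<bar>Fst z B - ip m \<nu> \<mu>\<bar>))
     + (\<Sum>z\<in>seqs m n. \<Sum>B\<in>seqs m h. seq_prob \<nu> z * seq_prob \<pi> B * ind (s \<le> \<bar>Fst z B - ip m \<nu> \<pi>\<bar>))
     + (\<Sum>A\<in>seqs m h. \<Sum>B\<in>seqs m (N - h). seq_prob \<mu> A * seq_prob \<mu> B * ind (s \<le> \<bar>Fst A B - ip m \<mu> \<mu>\<bar>))
     + (\<Sum>A\<in>seqs m h. \<Sum>B\<in>seqs m (N - h). seq_prob \<pi> A * seq_prob \<pi> B * ind (s \<le> \<bar>Fst A B - ip m \<pi> \<pi>\<bar>))"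
    unfolding p_def
    using sum3_marg_zy[OF dp dm hf(4), where \<nu>=\<nu> and n=n and P="\<lambda>z B. s \<le> \<bar>Fst z B - ip m \<nu> \<mu>\<bar>"]
      sum3_marg_zx[OF dp dm hf(4), where \<nu>=\<nu> and n=n and P="\<lambda>z B. s \<le> \<bar>Fst z B - ip m \<nu> \<pi>\<bar>"]
      sum3_marg_y[OF dp dn hf(4), where \<mu>=\<mu> and n=n and P="\<lambda>A B. s \<le> \<bar>Fst A B - ip m \<mu> \<mu>\<bar>"]
      sum3_marg_x[OF dm dn hf(4), where \<pi>=\<pi> and n=n and P="\<lambda>A B. s \<le> \<bar>Fst A B - ip m \<pi> \<pi>\<bar>"]
    by simp
  also have "\<dots> \<le> 5 * exp (- (kap c \<eta> * R)) + 5 * exp (- (kap c \<eta> * R)) + 5 * exp (- (kap c \<eta> * R)) + 5 * exp (- (kap c \<eta> * R))"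
    unfolding s_def
    by (intro add_mono dev'[OF dn dm mn mm c0 e0 m0 n1 nm hf(3) hsmall Rle1] dev'[OF dn dp mn mp c0 e0 m0 n1 nm hf(3) hsmall Rle1]
       dev'[OF dm dm mm mm c0 e0 m0 hf(3) hm Nh1 Nhsmall Rle2] dev'[OF dp dp mp mp c0 e0 m0 hf(3) hm Nh1 Nhsmall Rle2])
  finally show ?thesis by simp
qed



lemma ip_comm: "ip m \<alpha> \<beta> = ip m \<beta> \<alpha>" by (simp add: ip_def mult.commute)

lemma SS_bound:
  assumes "admissible \<epsilon> c m \<pi> \<mu>" "0 < \<epsilon>" "0 < m"
  shows "\<epsilon>^2 / real m \<le> ip m \<mu> \<mu> - 2 * ip m \<pi> \<mu> + ip m \<pi> \<pi>"
proof -
  have e: "\<epsilon> \<le> (\<Sum>j\<in>{1..m}. \<bar>\<mu> j - \<pi> j\<bar>)" using assms(1) by (simp add: admissible_def)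
  have "(\<Sum>j\<in>{1..m}. \<bar>\<mu> j - \<pi> j\<bar>)^2 \<le> (\<Sum>j\<in>{1..m}. \<bar>\<mu> j - \<pi> j\<bar>^2) * card {1..m}"
    by (rule sum_squared_le_sum_of_squares)
  moreover have "\<epsilon>^2 \<le> (\<Sum>j\<in>{1..m}. \<bar>\<mu> j - \<pi> j\<bar>)^2" using e assms(2) by (intro power_mono) auto
  ultimately have "\<epsilon>^2 \<le> (\<Sum>j\<in>{1..m}. (\<mu> j - \<pi> j)^2) * real m" by simp
  moreover have "(\<Sum>j\<in>{1..m}. (\<mu> j - \<pi> j)^2) = ip m \<mu> \<mu> - 2 * ip m \<pi> \<mu> + ip m \<pi> \<pi>"
    by (simp add: ip_def power2_eq_square algebra_simps sum.distrib sum_subtractf sum_distrib_left)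
  ultimately show ?thesis using assms(3) by (simp add: divide_le_eq)
qed

lemma T_pi: fixes A B C F1 F2 F3 F4 t S :: real
  shows "\<lbrakk>S \<le> A - 2 * B + C; 0 < F1 - F2 - (F3 - F4) / 2; \<bar>F1 - B\<bar> < S / 6; \<bar>F2 - C\<bar> < S / 6;
   \<bar>F3 - A\<bar> < S / 6; \<bar>F4 - C\<bar> < S / 6\<rbrakk> \<Longrightarrow> False"
  unfolding abs_less_iff by argo

lemma T_mu: fixes A B C F1 F2 F3 F4 t S :: real
  shows "\<lbrakk>S \<le> A - 2 * B + C; \<not> 0 < F1 - F2 - (F3 - F4) / 2; \<bar>F1 - A\<bar> < S / 6; \<bar>F2 - B\<bar> < S / 6;
   \<bar>F3 - A\<bar> < S / 6; \<bar>F4 - C\<bar> < S / 6\<rbrakk> \<Longrightarrow> False"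
  unfolding abs_less_iff by argo

definition cls :: "(nat \<Rightarrow> nat) \<Rightarrow> nat \<Rightarrow> nat list \<Rightarrow> nat list \<Rightarrow> nat list \<Rightarrow> bool" where
  "cls N m x y z = (0 < Tst (N m div 2) x y z)"

lemma decide_pi:
  assumes "admissible \<epsilon> c m \<pi> \<mu>" "0 < \<epsilon>" "0 < m" "0 < Tst h x y z"
  shows "\<epsilon>^2/6 / real m \<le> \<bar>Fst z (take h y) - ip m \<pi> \<mu>\<bar> \<or> \<epsilon>^2/6 / real m \<le> \<bar>Fst z (take h x) - ip m \<pi> \<pi>\<bar>
        \<or> \<epsilon>^2/6 / real m \<le> \<bar>Fst (take h y) (drop h y) - ip m \<mu> \<mu>\<bar> \<or> \<epsilon>^2/6 / real m \<le> \<bar>Fst (take h x) (drop h x) - ip m \<pi> \<pi>\<bar>"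
proof (rule ccontr)
  assume neg: "\<not> ?thesis"
  have eq: "\<epsilon>^2/6 / real m = (\<epsilon>^2 / real m) / 6" by simp
  have h: "\<bar>Fst z (take h y) - ip m \<pi> \<mu>\<bar> < (\<epsilon>^2 / real m) / 6" "\<bar>Fst z (take h x) - ip m \<pi> \<pi>\<bar> < (\<epsilon>^2 / real m) / 6"
    "\<bar>Fst (take h y) (drop h y) - ip m \<mu> \<mu>\<bar> < (\<epsilon>^2 / real m) / 6" "\<bar>Fst (take h x) (drop h x) - ip m \<pi> \<pi>\<bar> < (\<epsilon>^2 / real m) / 6"
    using neg eq by auto
  show False by (rule T_pi[OF SS_bound[OF assms(1-3)] assms(4)[unfolded Tst_def] h])
qed

lemma decide_mu:
  assumes "admissible \<epsilon> c m \<pi> \<mu>" "0 < \<epsilon>" "0 < m" "\<not> 0 < Tst h x y z"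
  shows "\<epsilon>^2/6 / real m \<le> \<bar>Fst z (take h y) - ip m \<mu> \<mu>\<bar> \<or> \<epsilon>^2/6 / real m \<le> \<bar>Fst z (take h x) - ip m \<mu> \<pi>\<bar>
        \<or> \<epsilon>^2/6 / real m \<le> \<bar>Fst (take h y) (drop h y) - ip m \<mu> \<mu>\<bar> \<or> \<epsilon>^2/6 / real m \<le> \<bar>Fst (take h x) (drop h x) - ip m \<pi> \<pi>\<bar>"
proof (rule ccontr)
  assume neg: "\<not> ?thesis"
  have eq: "\<epsilon>^2/6 / real m = (\<epsilon>^2 / real m) / 6" by simp
  have ipc: "ip m \<mu> \<pi> = ip m \<pi> \<mu>" by (rule ip_comm)
  have h: "\<bar>Fst z (take h y) - ip m \<mu> \<mu>\<bar> < (\<epsilon>^2 / real m) / 6" "\<bar>Fst z (take h x) - ip m \<pi> \<mu>\<bar> < (\<epsilon>^2 / real m) / 6"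
    "\<bar>Fst (take h y) (drop h y) - ip m \<mu> \<mu>\<bar> < (\<epsilon>^2 / real m) / 6" "\<bar>Fst (take h x) (drop h x) - ip m \<pi> \<pi>\<bar> < (\<epsilon>^2 / real m) / 6"
    using neg eq ipc by auto
  show False by (rule T_mu[OF SS_bound[OF assms(1-3)] assms(4)[unfolded Tst_def] h])
qed



lemma worst_bound:
  fixes m :: nat and N n :: "nat \<Rightarrow> nat" and \<epsilon> c :: real
  assumes c0: "0 < c" and e0: "0 < \<epsilon>" and m0: "0 < m" and N3: "3 \<le> N m" and n1: "1 \<le> n m"
    and nm: "n m \<le> m" and Nm: "N m \<le> m" and Ns: "real (N m) \<le> (\<epsilon>^2/6) * real m / (16 * c^2)"
  shows "worst_error \<epsilon> c m (N m) (n m) (cls N m)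
     \<le> ereal (20 * exp (- (kap c (\<epsilon>^2/6) * (min (real (N m) ^ 2) (real (N m) * real (n m)) / real m / 6))))"
  unfolding worst_error_def
proof (rule SUP_least, clarify)
  fix \<pi> \<mu> assume adm: "admissible \<epsilon> c m \<pi> \<mu>"
  define R where "R = min (real (N m) ^ 2) (real (N m) * real (n m)) / real m / 6"
  have e6: "0 < \<epsilon>^2/6" using e0 by simp
  have dp: "is_dist m \<pi>" and dm: "is_dist m \<mu>" and mp: "\<forall>j\<in>{1..m}. \<pi> j \<le> c / real m"
    and mm: "\<forall>j\<in>{1..m}. \<mu> j \<le> c / real m" using adm by (auto simp: admissible_def)
  have P1: "prob_decide m (N m) (n m) (cls N m) True \<pi> \<mu> \<pi> \<le> 20 * exp (- (kap c (\<epsilon>^2/6) * R))"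
    unfolding R_def
    by (rule err_side[OF dp dm dp mp mm mp c0 e6 m0 N3 n1 nm Nm Ns])
       (auto simp: cls_def dest: decide_pi[OF adm e0 m0])
  have P2: "prob_decide m (N m) (n m) (cls N m) False \<pi> \<mu> \<mu> \<le> 20 * exp (- (kap c (\<epsilon>^2/6) * R))"
    unfolding R_def
    by (rule err_side[OF dp dm dm mp mm mm c0 e6 m0 N3 n1 nm Nm Ns])
       (auto simp: cls_def dest: decide_mu[OF adm e0 m0])
  show "ereal (1 / 2 * prob_decide m (N m) (n m) (cls N m) True \<pi> \<mu> \<pi> + 1 / 2 * prob_decide m (N m) (n m) (cls N m) False \<pi> \<mu> \<mu>)
        \<le> ereal (20 * exp (- (kap c (\<epsilon>^2/6) * (min (real (N m) ^ 2) (real (N m) * real (n m)) / real m / 6))))"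
    using P1 P2 unfolding R_def by simp
qed



lemma final_ineq:
  assumes W: "W \<le> ereal (20 * exp (- (k * r)))" and k: "0 < k" and r: "2 * ln 20 / k \<le> r" and r0: "0 < r"
  shows "eln W * ereal (1 / r) \<le> ereal (- k / 2)"
proof (cases "W \<le> 0")
  case True
  then have "eln W = - \<infinity>" by (simp add: eln_def)
  then show ?thesis using r0 by simp
next
  case False
  then obtain w where w: "W = ereal w" "0 < w" using W
    by (cases W) auto
  have wle: "w \<le> 20 * exp (- (k * r))" using W w by simp
  have "eln W = ereal (ln w)" using w by (simp add: eln_def)
  have "ln w \<le> ln (20 * exp (- (k * r)))" using wle w by simp
  also have "\<dots> = ln 20 - k * r" by (simp add: ln_mult)
  finally have lw: "ln w \<le> ln 20 - k * r" .
  have "ln w * (1 / r) \<le> (ln 20 - k * r) * (1 / r)" using lw r0 by (intro mult_right_mono) auto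
  also have "\<dots> = ln 20 / r - k" using r0 by (simp add: field_simps)
  also have "\<dots> \<le> - k / 2"
  proof -
    have "ln 20 \<le> k / 2 * r" using r k by (simp add: field_simps)
    then have "ln 20 / r \<le> k / 2" using r0 by (simp add: divide_le_eq mult.commute)
    then show ?thesis by linarith
  qed
  finally show ?thesis using \<open>eln W = ereal (ln w)\<close> by simp
qed



theorem theorem2:
  fixes N n :: "nat \<Rightarrow> nat" and \<epsilon> cbar :: real
  assumes "\<epsilon> > 0" and "cbar > 0"
    and "\<forall>m. N m \<ge> 1" and "\<forall>m. n m \<ge> 1"
    and "filterlim N at_top sequentially" and "filterlim n at_top sequentially"
    and "(\<lambda>m. real (N m)) \<in> o(\<lambda>m. real m)"
    and "(\<lambda>m. real (n m)) \<in> o(\<lambda>m. real m)"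
    and "(\<lambda>m. real m) \<in> o(\<lambda>m. min (real (N m) ^ 2) (real (N m) * real (n m)))"
  shows "\<exists>\<phi> :: nat \<Rightarrow> nat list \<Rightarrow> nat list \<Rightarrow> nat list \<Rightarrow> bool.
           error_exponent \<epsilon> cbar N n \<phi> > 0"
proof
  define k where "k = kap cbar (\<epsilon>^2/6) / 6"
  have k0: "0 < k" unfolding k_def using kap_pos[OF assms(2)] assms(1) by simp
  define T where "T = max 1 (2 * ln 20 / k)"
  have T1: "1 \<le> T" "2 * ln 20 / k \<le> T" by (auto simp: T_def)
  define f where "f m = eln (worst_error \<epsilon> cbar m (N m) (n m) (cls N m)) * ereal (1 / rate N n m)" for m
  have ev1: "eventually (\<lambda>m. 0 < m) sequentially" by (rule eventually_gt_at_top)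
  have ev2: "eventually (\<lambda>m. 3 \<le> N m) sequentially" using assms(5) by (simp add: filterlim_at_top)
  have ev3: "eventually (\<lambda>m. n m \<le> m) sequentially"
    using landau_o.smallD[OF assms(8), of 1] by (auto elim!: eventually_mono)
  have ev4: "eventually (\<lambda>m. N m \<le> m) sequentially"
    using landau_o.smallD[OF assms(7), of 1] by (auto elim!: eventually_mono)
  have ev5: "eventually (\<lambda>m. real (N m) \<le> (\<epsilon>^2/6) * real m / (16 * cbar^2)) sequentially"
  proof -
    have "0 < (\<epsilon>^2/6) / (16 * cbar^2)" using assms(1,2) by simp
    from landau_o.smallD[OF assms(7) this] show ?thesis by (auto elim!: eventually_mono)
  qed
  have ev6: "eventually (\<lambda>m. 0 < m \<longrightarrow> T \<le> rate N n m) sequentially"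
  proof -
    have "0 < 1 / T" using T1 by simp
    from landau_o.smallD[OF assms(9) this] show ?thesis
    proof (rule eventually_mono, intro impI)
      fix m :: nat assume h: "norm (real m) \<le> 1 / T * norm (min (real (N m) ^ 2) (real (N m) * real (n m)))"
        and m0: "0 < m"
      have "0 \<le> min (real (N m) ^ 2) (real (N m) * real (n m))" by simp
      then have "real m \<le> min (real (N m) ^ 2) (real (N m) * real (n m)) / T" using h by simp
      then have "real m * T \<le> min (real (N m) ^ 2) (real (N m) * real (n m))" using T1 by (simp add: le_divide_eq)
      then show "T \<le> rate N n m" using m0 by (simp add: rate_def le_divide_eq mult.commute)
    qed
  qed
  have "eventually (\<lambda>m. f m \<le> ereal (- k / 2)) sequentially"
    using ev1 ev2 ev3 ev4 ev5 ev6
  proof eventually_elim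
    case (elim m)
    have W: "worst_error \<epsilon> cbar m (N m) (n m) (cls N m) \<le> ereal (20 * exp (- (k * rate N n m)))"
    proof -
      have Wb: "worst_error \<epsilon> cbar m (N m) (n m) (cls N m)
          \<le> ereal (20 * exp (- (kap cbar (\<epsilon>^2/6) * (min (real (N m) ^ 2) (real (N m) * real (n m)) / real m / 6))))"
        by (rule worst_bound) (use elim assms(1,2,4) in auto)
      have eq: "kap cbar (\<epsilon>^2/6) * (min (real (N m) ^ 2) (real (N m) * real (n m)) / real m / 6) = k * rate N n m"
        by (simp add: k_def rate_def)
      show ?thesis using Wb by (simp only: eq)
    qed
    have r0: "0 < rate N n m" using elim T1 by linarith
    show ?case unfolding f_def
      by (rule final_ineq[OF W k0]) (use elim T1 r0 in auto)
  qed
  then have "limsup f \<le> ereal (- k / 2)" by (rule Limsup_bounded)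
  then have "- ereal (- k / 2) \<le> - limsup f" by (subst ereal_minus_le_minus)
  then have "ereal (k / 2) \<le> error_exponent \<epsilon> cbar N n (cls N)"
    unfolding error_exponent_def f_def by simp
  moreover have "0 < ereal (k / 2)" using k0 by simp
  ultimately show "0 < error_exponent \<epsilon> cbar N n (cls N)" by (metis order_less_le_trans)
qed


end
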